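(* Let $(X,\tau)$ be a topological space and let $\mathcal{F}:\mathcal{O}(X)^{\mathrm{op}}\to\mathbf{Set}$ be a stonean sheaf with $\mathcal{F}(X)\neq\emptyset$. Then $\mathcal{F}(U)=\{f\restriction U: f\in\mathcal{F}(X)\}$ for all $U\in\mathcal{O}(X)$.
   Context: $\mathcal{O}(X)$ is the set of non-empty open subsets of $X$ ordered by inclusion; a presheaf is a functor $\mathcal{F}:\mathcal{O}(X)^{\mathrm{op}}\to\mathbf{Set}$ and $f\restriction U=\mathcal{F}(U\subseteq V)(f)$ for $f\in\mathcal{F}(V)$. A family $\{f_i\}$ with $f_i\in\mathcal{F}(U_i)$ is compatible if $f_i\restriction W=f_j\restriction W$ for all $i,j$ and non-empty open $W\subseteq U_i\cap U_j$; a collation on $U$ is $f\in\mathcal{F}(U)$ with $f\restriction W=f_i\restriction W$ for all $i$ and non-empty open $W\subseteq U\cap U_i$. $\{U_i\}$ is a dense covering of $U$ if every non-empty open $V\subseteq U$ meets some $U_i$ in a non-empty open set. $\mathcal{F}$ is a stonean sheaf if every compatible family indexed by a dense covering of $U$ has a unique collation on $U$. *)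

theory Defs
  imports "HOL-Analysis.Analysis"
begin

definition opens :: "'a topology \<Rightarrow> 'a set set" where
  "opens X = {U. openin X U \<and> U \<noteq> {}}"

definition presheaf :: "'a topology \<Rightarrow> ('a set \<Rightarrow> 'b set) \<Rightarrow> ('a set \<Rightarrow> 'a set \<Rightarrow> 'b \<Rightarrow> 'b) \<Rightarrow> bool" where
  "presheaf X F res \<longleftrightarrow>
     (\<forall>V\<in>opens X. \<forall>U\<in>opens X. U \<subseteq> V \<longrightarrow> (\<forall>f\<in>F V. res V U f \<in> F U)) \<and>
     (\<forall>U\<in>opens X. \<forall>f\<in>F U. res U U f = f) \<and>
     (\<forall>U\<in>opens X. \<forall>V\<in>opens X. \<forall>W\<in>opens X. W \<subseteq> V \<longrightarrow> V \<subseteq> U \<longrightarrow>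
        (\<forall>f\<in>F U. res V W (res U V f) = res U W f))"

definition compatible_family :: "'a topology \<Rightarrow> ('a set \<Rightarrow> 'b set) \<Rightarrow> ('a set \<Rightarrow> 'a set \<Rightarrow> 'b \<Rightarrow> 'b)
    \<Rightarrow> 'i set \<Rightarrow> ('i \<Rightarrow> 'a set) \<Rightarrow> ('i \<Rightarrow> 'b) \<Rightarrow> bool" where
  "compatible_family X F res I Us fs \<longleftrightarrow>
     (\<forall>i\<in>I. Us i \<in> opens X \<and> fs i \<in> F (Us i)) \<and>
     (\<forall>i\<in>I. \<forall>j\<in>I. \<forall>W\<in>opens X. W \<subseteq> Us i \<inter> Us j \<longrightarrow> res (Us i) W (fs i) = res (Us j) W (fs j))"

definition collation :: "'a topology \<Rightarrow> ('a set \<Rightarrow> 'b set) \<Rightarrow> ('a set \<Rightarrow> 'a set \<Rightarrow> 'b \<Rightarrow> 'b)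
    \<Rightarrow> 'i set \<Rightarrow> ('i \<Rightarrow> 'a set) \<Rightarrow> ('i \<Rightarrow> 'b) \<Rightarrow> 'a set \<Rightarrow> 'b \<Rightarrow> bool" where
  "collation X F res I Us fs U f \<longleftrightarrow>
     f \<in> F U \<and>
     (\<forall>i\<in>I. \<forall>W\<in>opens X. W \<subseteq> U \<inter> Us i \<longrightarrow> res U W f = res (Us i) W (fs i))"

definition dense_covering :: "'a topology \<Rightarrow> 'i set \<Rightarrow> ('i \<Rightarrow> 'a set) \<Rightarrow> 'a set \<Rightarrow> bool" where
  "dense_covering X I Us U \<longleftrightarrow>
     (\<forall>i\<in>I. Us i \<in> opens X) \<and>
     (\<forall>V\<in>opens X. V \<subseteq> U \<longrightarrow> (\<exists>i\<in>I. V \<inter> Us i \<in> opens X))"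

text \<open>Families are indexed by sets of type 'a set (enough: repeated open sets in a
  compatible family carry equal sections).\<close>
definition stonean_sheaf :: "'a topology \<Rightarrow> ('a set \<Rightarrow> 'b set) \<Rightarrow> ('a set \<Rightarrow> 'a set \<Rightarrow> 'b \<Rightarrow> 'b) \<Rightarrow> bool" where
  "stonean_sheaf X F res \<longleftrightarrow> presheaf X F res \<and>
     (\<forall>U\<in>opens X. \<forall>(I::'a set set) Us fs.
        dense_covering X I Us U \<and> compatible_family X F res I Us fs \<longrightarrow>
        (\<exists>!f. collation X F res I Us fs U f))"

end

theory Submission
  imports Defs
begin

theorem mainTheorem9:
  fixes X :: "'a topology" and F :: "'a set \<Rightarrow> 'b set" and res :: "'a set \<Rightarrow> 'a set \<Rightarrow> 'b \<Rightarrow> 'b"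
  assumes "stonean_sheaf X F res"
    and "F (topspace X) \<noteq> {}"
  shows "\<forall>U\<in>opens X. F U = res (topspace X) U ` F (topspace X)"
proof
  fix U assume U: "U \<in> opens X"
  have ps: "presheaf X F res" and sh: "\<forall>U\<in>opens X. \<forall>(I::'a set set) Us fs.
        dense_covering X I Us U \<and> compatible_family X F res I Us fs \<longrightarrow>
        (\<exists>!f. collation X F res I Us fs U f)"
    using assms(1) unfolding stonean_sheaf_def by auto
  have Uo: "openin X U" "U \<noteq> {}" using U by (auto simp: opens_def)
  have Usub: "U \<subseteq> topspace X" using Uo openin_subset by auto
  have T: "topspace X \<in> opens X" using Uo Usub by (auto simp: opens_def)
  obtain h where h: "h \<in> F (topspace X)" using assms(2) by auto
  show "F U = res (topspace X) U ` F (topspace X)"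
  proof
    show "res (topspace X) U ` F (topspace X) \<subseteq> F U"
      using ps T U Usub unfolding presheaf_def by blast
  next
    show "F U \<subseteq> res (topspace X) U ` F (topspace X)"
    proof
      fix g assume g: "g \<in> F U"
      define V where "V = topspace X - X closure_of U"
      have Vo: "openin X V" unfolding V_def by (simp add: openin_diff)
      have UV: "U \<inter> V = {}" unfolding V_def using closure_of_subset[OF Usub] by auto
      define I where "I = {S \<in> {U, V}. S \<noteq> {}}"
      define fs where "fs = (\<lambda>S. if S = U then g else res (topspace X) S h)"
      have UI: "U \<in> I" using Uo unfolding I_def by auto
      have Iopen: "\<forall>i\<in>I. i \<in> opens X" using Uo Vo unfolding I_def opens_def by auto
      have dc: "dense_covering X I id (topspace X)"
        unfolding dense_covering_def
      proof (intro conjI ballI impI)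
        fix i assume "i \<in> I" thus "id i \<in> opens X" using Iopen by auto
      next
        fix W assume W: "W \<in> opens X" "W \<subseteq> topspace X"
        show "\<exists>i\<in>I. W \<inter> id i \<in> opens X"
        proof (cases "W \<inter> U = {}")
          case True
          hence "W \<inter> X closure_of U = {}"
            using openin_Int_closure_of_eq_empty[of X W U] W(1) by (auto simp: opens_def)
          hence "W \<subseteq> V" using W unfolding V_def by auto
          hence "W \<inter> V = W" "V \<in> I" using W unfolding I_def opens_def by auto
          thus ?thesis using W by (metis id_apply)
        next
          case False
          hence "W \<inter> U \<in> opens X" using W Uo by (auto simp: opens_def)
          thus ?thesis using UI by force
        qed
      qed
      have cf: "compatible_family X F res I id fs"
        unfolding compatible_family_def
      proof (intro conjI ballI impI)
        fix i assume i: "i \<in> I"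
        show "id i \<in> opens X" using Iopen i by auto
        show "fs i \<in> F (id i)"
        proof (cases "i = U")
          case True thus ?thesis using g by (simp add: fs_def)
        next
          case False
          hence "i = V" "i \<in> opens X" using i Iopen unfolding I_def by auto
          moreover have "V \<subseteq> topspace X" unfolding V_def by auto
          ultimately show ?thesis using False ps T h unfolding fs_def presheaf_def by auto
        qed
      next
        fix i j W assume ij: "i \<in> I" "j \<in> I" and W: "W \<in> opens X" "W \<subseteq> id i \<inter> id j"
        show "res (id i) W (fs i) = res (id j) W (fs j)"
        proof (cases "i = j")
          case True thus ?thesis by simp
        next
          case False
          hence "i \<inter> j = {}" using ij UV unfolding I_def by auto
          thus ?thesis using W by (auto simp: opens_def)
        qed
      qed
      obtain f where f: "collation X F res I id fs (topspace X) f"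
        using sh T dc cf by blast
      hence fF: "f \<in> F (topspace X)"
        and fe: "res (topspace X) U f = res U U (fs U)"
        using UI U Usub unfolding collation_def by auto
      have "res U U (fs U) = g" using ps U g unfolding presheaf_def fs_def by auto
      thus "g \<in> res (topspace X) U ` F (topspace X)" using fF fe by force
    qed
  qed
qed

end
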